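(* Let $n\ge 1$ and $a\ge 0$ be integers with $a\le n$. Then \[ \sum_{l=0}^{a}(1-l)\,e_l\,X_{P_{n-l}}=\begin{cases}X_{K_{a+1}^{n-1-a}}\big/a!, & \text{if } a\le n-1,\\ e_n, & \text{if } a=n.\end{cases} \]
   Context: The chromatic symmetric function of a finite simple graph $G$ is $X_G=\sum_{\kappa}\prod_{v\in V(G)}x_{\kappa(v)}$, where $\kappa$ ranges over proper colorings $\kappa:V(G)\to\{1,2,\dots\}$; the empty graph has $X=1$. $e_l$ is the $l$-th elementary symmetric function, $e_0=1$. $P_j$ is the path on $j$ vertices ($P_0$ empty). $K_{s}^{t}$ is the lollipop: the complete graph $K_s$ with a pendant path of length $t$ (with $t$ new vertices) attached at one vertex. *)

theory Defs
  imports Complex_Main "HOL-Library.Poly_Mapping" "HOL-Library.FuncSet"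
begin

(* A symmetric function (formal power series in the variables x_0, x_1, ...)
   is represented by its coefficient function on monomials; a monomial
   x^alpha is given by a finitely supported exponent vector alpha. *)
type_synonym sf = "(nat \<Rightarrow>\<^sub>0 nat) \<Rightarrow> rat"

definition sf_mult :: "sf \<Rightarrow> sf \<Rightarrow> sf" where
  "sf_mult f g = (\<lambda>\<alpha>. \<Sum>p\<in>{(\<beta>, \<gamma>). \<beta> + \<gamma> = \<alpha>}. f (fst p) * g (snd p))"

definition elem_sf :: "nat \<Rightarrow> sf" where
  "elem_sf l = (\<lambda>\<alpha>. if (\<forall>i. Poly_Mapping.lookup \<alpha> i \<le> 1) \<and> (\<Sum>i\<in>Poly_Mapping.keys \<alpha>. Poly_Mapping.lookup \<alpha> i) = l
                     then 1 else 0)"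

definition proper_col :: "'v set \<Rightarrow> ('v \<Rightarrow> 'v \<Rightarrow> bool) \<Rightarrow> ('v \<Rightarrow> nat) \<Rightarrow> bool" where
  "proper_col V E \<kappa> \<longleftrightarrow> (\<forall>u\<in>V. \<forall>v\<in>V. E u v \<longrightarrow> \<kappa> u \<noteq> \<kappa> v)"

definition chrom_sf :: "'v set \<Rightarrow> ('v \<Rightarrow> 'v \<Rightarrow> bool) \<Rightarrow> sf" where
  "chrom_sf V E = (\<lambda>\<alpha>. of_nat (card {\<kappa> \<in> V \<rightarrow>\<^sub>E (UNIV :: nat set).
        proper_col V E \<kappa> \<and> (\<forall>i. card {v\<in>V. \<kappa> v = i} = Poly_Mapping.lookup \<alpha> i)}))"

definition path_V :: "nat \<Rightarrow> nat set" where
  "path_V j = {0..<j}"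

definition path_E :: "nat \<Rightarrow> nat \<Rightarrow> bool" where
  "path_E u v \<longleftrightarrow> u = v + 1 \<or> v = u + 1"

(* lollipop K_s^t: clique on 0..s-1, pendant path s-1, s, ..., s+t-1 *)
definition lollipop_V :: "nat \<Rightarrow> nat \<Rightarrow> nat set" where
  "lollipop_V s t = {0..<s+t}"

definition lollipop_E :: "nat \<Rightarrow> nat \<Rightarrow> nat \<Rightarrow> bool" where
  "lollipop_E s u v \<longleftrightarrow> (u < s \<and> v < s \<and> u \<noteq> v) \<or> ((u = v + 1 \<or> v = u + 1) \<and> max u v \<ge> s)"

end

theory Submission
  imports Defs
begin

definition cv :: "'v set \<Rightarrow> ('v \<Rightarrow> nat) \<Rightarrow> (nat \<Rightarrow>\<^sub>0 nat)" where
  "cv A k = Abs_poly_mapping (\<lambda>i. card {v\<in>A. k v = i})"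

lemma lookup_cv: assumes "finite A" shows "Poly_Mapping.lookup (cv A k) i = card {v\<in>A. k v = i}"
proof -
  have "{i. card {v\<in>A. k v = i} \<noteq> 0} \<subseteq> k ` A" by (auto simp: card_eq_0_iff)
  hence "finite {i. card {v\<in>A. k v = i} \<noteq> 0}" using assms finite_subset by blast
  thus ?thesis unfolding cv_def by (simp add: Abs_poly_mapping_inverse)
qed

definition col :: "'v set \<Rightarrow> ('v \<Rightarrow> 'v \<Rightarrow> bool) \<Rightarrow> (nat \<Rightarrow>\<^sub>0 nat) \<Rightarrow> ('v \<Rightarrow> nat) set" where
  "col V E \<alpha> = {k \<in> V \<rightarrow>\<^sub>E (UNIV :: nat set). proper_col V E k \<and> cv V k = \<alpha>}"

lemma chrom_col: assumes "finite V" shows "chrom_sf V E \<alpha> = of_nat (card (col V E \<alpha>))"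
proof -
  have "\<And>k. (\<forall>i. card {v\<in>V. k v = i} = Poly_Mapping.lookup \<alpha> i) \<longleftrightarrow> cv V k = \<alpha>"
  proof -
    fix k
    have "cv V k = \<alpha> \<longleftrightarrow> (\<forall>i. Poly_Mapping.lookup (cv V k) i = Poly_Mapping.lookup \<alpha> i)"
      by (metis poly_mapping_eqI)
    also have "\<dots> \<longleftrightarrow> (\<forall>i. card {v\<in>V. k v = i} = Poly_Mapping.lookup \<alpha> i)"
      by (simp only: lookup_cv[OF assms])
    finally show "?thesis k" by simp
  qed
  thus ?thesis unfolding chrom_sf_def col_def by simp
qed

lemma cv_restrict: "cv A (restrict k A) = cv A k"
proof -
  have "{v\<in>A. restrict k A v = i} = {v\<in>A. k v = i}" for i by auto
  thus ?thesis by (simp add: cv_def)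
qed

lemma cv_Un: assumes "finite A" "finite B" "A \<inter> B = {}" shows "cv (A \<union> B) k = cv A k + cv B k"
proof (rule poly_mapping_eqI)
  fix i
  have "{v\<in>A\<union>B. k v = i} = {v\<in>A. k v = i} \<union> {v\<in>B. k v = i}" by auto
  hence "card {v\<in>A\<union>B. k v = i} = card {v\<in>A. k v = i} + card {v\<in>B. k v = i}"
    using assms by (simp add: card_Un_disjoint disjoint_iff)
  thus "Poly_Mapping.lookup (cv (A \<union> B) k) i = Poly_Mapping.lookup (cv A k + cv B k) i"
    using assms by (simp add: lookup_cv lookup_add)
qed

lemma col_vals: assumes "finite V" "k \<in> col V E \<alpha>" "v \<in> V" shows "k v \<in> Poly_Mapping.keys \<alpha>"
proof -
  have "card {u\<in>V. k u = k v} \<noteq> 0" using assms(1,3) by (auto simp: card_eq_0_iff)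
  hence "Poly_Mapping.lookup (cv V k) (k v) \<noteq> 0" using assms(1) by (simp add: lookup_cv)
  thus ?thesis using assms(2) unfolding col_def by (auto simp: in_keys_iff)
qed

lemma finite_col: assumes "finite V" shows "finite (col V E \<alpha>)"
proof -
  have "col V E \<alpha> \<subseteq> V \<rightarrow>\<^sub>E Poly_Mapping.keys \<alpha>" using col_vals[OF assms] unfolding col_def by auto
  thus ?thesis using assms by (meson finite_PiE finite_keys finite_subset)
qed


lemma finite_S: "finite {(\<beta>, \<gamma>). \<beta> + \<gamma> = (\<alpha> :: nat \<Rightarrow>\<^sub>0 nat)}"
proof -
  let ?S = "{(\<beta>, \<gamma>). \<beta> + \<gamma> = \<alpha>}"
  let ?K = "Poly_Mapping.keys \<alpha>"
  let ?M = "Max (Poly_Mapping.lookup \<alpha> ` ?K)"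
  let ?g = "\<lambda>p. restrict (Poly_Mapping.lookup (fst p)) ?K"
  have le: "Poly_Mapping.lookup (fst p) i \<le> Poly_Mapping.lookup \<alpha> i" if "p \<in> ?S" for p i
    using that by (auto simp: lookup_add)
  have "?g ` ?S \<subseteq> ?K \<rightarrow>\<^sub>E {0..?M}"
  proof
    fix x assume "x \<in> ?g ` ?S"
    then obtain p where p: "p \<in> ?S" "x = ?g p" by blast
    have "Poly_Mapping.lookup (fst p) i \<le> ?M" if "i \<in> ?K" for i
    proof -
      have "Poly_Mapping.lookup \<alpha> i \<le> ?M" using that by (simp add: Max_ge)
      thus ?thesis using le[OF p(1), of i] by linarith
    qed
    thus "x \<in> ?K \<rightarrow>\<^sub>E {0..?M}" using p(2) by auto
  qed
  hence fin: "finite (?g ` ?S)" by (rule finite_subset) (intro finite_PiE; simp)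
  have "inj_on ?g ?S"
  proof (rule inj_onI)
    fix p q assume pq: "p \<in> ?S" "q \<in> ?S" "?g p = ?g q"
    have "Poly_Mapping.lookup (fst p) i = Poly_Mapping.lookup (fst q) i" for i
    proof (cases "i \<in> ?K")
      case True thus ?thesis using fun_cong[OF pq(3), of i] by simp
    next
      case False thus ?thesis using le[OF pq(1), of i] le[OF pq(2), of i] by (simp add: in_keys_iff)
    qed
    hence f: "fst p = fst q" by (simp add: poly_mapping_eqI)
    have "fst p + snd p = fst q + snd q" using pq(1,2) by auto
    hence "snd p = snd q" using f by simp
    thus "p = q" using f by (simp add: prod_eq_iff)
  qed
  thus ?thesis using finite_imageD[OF fin] by simp
qed


lemma conv:
  assumes V: "finite V" and AV: "A \<subseteq> V" and B: "B = V - A"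
    and noE: "\<forall>u\<in>A. \<forall>v\<in>B. \<not> E u v \<and> \<not> E v u"
  shows "card (col V E \<alpha>) = (\<Sum>p\<in>{(\<beta>, \<gamma>). \<beta> + \<gamma> = \<alpha>}. card (col A E (fst p)) * card (col B E (snd p)))"
proof -
  let ?S = "{(\<beta>, \<gamma>). \<beta> + \<gamma> = \<alpha>}"
  let ?F = "\<lambda>p. col A E (fst p) \<times> col B E (snd p)"
  have fA: "finite A" using V AV finite_subset by blast
  have fB: "finite B" using V B by simp
  have VAB: "V = A \<union> B" and dAB: "A \<inter> B = {}" using AV B by auto
  have cvV: "cv V k = cv A k + cv B k" for k using cv_Un[OF fA fB dAB] VAB by simp
  have "(\<Sum>p\<in>?S. card (col A E (fst p)) * card (col B E (snd p))) = card (Sigma ?S ?F)"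
    using finite_S[of \<alpha>] fA fB by (simp add: card_cartesian_product finite_col)
  moreover
  define f where "f = (\<lambda>k. ((cv A k, cv B k), (restrict k A, restrict k B)))"
  define g where "g = (\<lambda>q::((nat \<Rightarrow>\<^sub>0 nat) \<times> (nat \<Rightarrow>\<^sub>0 nat)) \<times> (_ \<Rightarrow> nat) \<times> (_ \<Rightarrow> nat).
     (\<lambda>v. if v \<in> A then fst (snd q) v else snd (snd q) v))"
  have "bij_betw f (col V E \<alpha>) (Sigma ?S ?F)"
  proof (rule bij_betw_byWitness[where f'=g])
    show "\<forall>k\<in>col V E \<alpha>. g (f k) = k"
    proof
      fix k assume "k \<in> col V E \<alpha>"
      hence "k \<in> V \<rightarrow>\<^sub>E UNIV" unfolding col_def by auto
      thus "g (f k) = k" unfolding f_def g_def using VAB by (auto simp: fun_eq_iff PiE_def extensional_def)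
    qed
    show "\<forall>q\<in>Sigma ?S ?F. f (g q) = q"
    proof
      fix q assume q: "q \<in> Sigma ?S ?F"
      obtain b c k1 k2 where qq: "q = ((b, c), (k1, k2))" by (metis prod.collapse)
      have k1: "k1 \<in> col A E b" and k2: "k2 \<in> col B E c" using q qq by auto
      have e1: "restrict (g q) A = k1" using k1 unfolding g_def qq col_def
        by (auto simp: fun_eq_iff PiE_def extensional_def)
      have e2: "restrict (g q) B = k2" using k2 dAB unfolding g_def qq col_def
        by (auto simp: fun_eq_iff PiE_def extensional_def)
      have "cv A (g q) = b" using k1 e1 cv_restrict[of A "g q"] unfolding col_def by simp
      moreover have "cv B (g q) = c" using k2 e2 cv_restrict[of B "g q"] unfolding col_def by simp
      ultimately show "f (g q) = q" unfolding f_def qq using e1 e2 qq by simp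
    qed
    show "f ` col V E \<alpha> \<subseteq> Sigma ?S ?F"
    proof
      fix x assume "x \<in> f ` col V E \<alpha>"
      then obtain k where k: "k \<in> col V E \<alpha>" "x = f k" by blast
      have kp: "proper_col V E k" "cv V k = \<alpha>" using k unfolding col_def by auto
      have "restrict k A \<in> col A E (cv A k)"
        using kp AV unfolding col_def proper_col_def by (auto simp: cv_restrict)
      moreover have "restrict k B \<in> col B E (cv B k)"
        using kp B unfolding col_def proper_col_def by (auto simp: cv_restrict)
      moreover have "cv A k + cv B k = \<alpha>" using kp cvV by simp
      ultimately show "x \<in> Sigma ?S ?F" unfolding k(2) f_def by simp
    qed
    show "g ` Sigma ?S ?F \<subseteq> col V E \<alpha>"
    proof
      fix x assume "x \<in> g ` Sigma ?S ?F"
      then obtain q where q: "q \<in> Sigma ?S ?F" "x = g q" by blast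
      obtain b c k1 k2 where qq: "q = ((b, c), (k1, k2))" by (metis prod.collapse)
      have k1: "k1 \<in> col A E b" and k2: "k2 \<in> col B E c" and bc: "b + c = \<alpha>" using q qq by auto
      have ext: "g q \<in> V \<rightarrow>\<^sub>E UNIV" using k1 k2 VAB unfolding g_def qq col_def
        by (auto simp: PiE_def extensional_def)
      have e1: "restrict (g q) A = k1" using k1 unfolding g_def qq col_def
        by (auto simp: fun_eq_iff PiE_def extensional_def)
      have e2: "restrict (g q) B = k2" using k2 dAB unfolding g_def qq col_def
        by (auto simp: fun_eq_iff PiE_def extensional_def)
      have "cv A (g q) = b" using k1 e1 cv_restrict[of A "g q"] unfolding col_def by simp
      moreover have "cv B (g q) = c" using k2 e2 cv_restrict[of B "g q"] unfolding col_def by simp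
      ultimately have cvq: "cv V (g q) = \<alpha>" using cvV bc by simp
      have "proper_col V E (g q)"
        unfolding proper_col_def
      proof (intro ballI impI)
        fix u v assume uv: "u \<in> V" "v \<in> V" "E u v"
        show "g q u \<noteq> g q v"
        proof (cases "u \<in> A")
          case True
          hence "v \<in> A" using uv noE VAB by blast
          thus ?thesis using True uv k1 unfolding g_def qq col_def proper_col_def by auto
        next
          case False
          hence "v \<notin> A" using uv noE VAB by blast
          moreover have "u \<in> B" "v \<in> B" using False \<open>v \<notin> A\<close> uv VAB by auto
          ultimately show ?thesis using False uv k2 unfolding g_def qq col_def proper_col_def by auto
        qed
      qed
      thus "x \<in> col V E \<alpha>" using ext cvq q(2) unfolding col_def by simp
    qed
  qed
  hence "card (col V E \<alpha>) = card (Sigma ?S ?F)" by (rule bij_betw_same_card)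
  ultimately show ?thesis by simp
qed


lemma cv_inj: assumes "finite C" "inj_on k C"
  shows "Poly_Mapping.lookup (cv C k) i = (if i \<in> k ` C then 1 else 0)"
proof (cases "i \<in> k ` C")
  case True
  then obtain v where v: "v \<in> C" "i = k v" by blast
  have "{u\<in>C. k u = i} = {v}" using v assms(2) by (auto simp: inj_on_def)
  thus ?thesis using True assms(1) by (simp add: lookup_cv)
next
  case False
  hence "{u\<in>C. k u = i} = {}" by auto
  thus ?thesis using False assms(1) by (simp add: lookup_cv)
qed

lemma card_inj_funcset:
  assumes "finite S" "finite T" "card S \<le> card T"
  shows "card {f \<in> S \<rightarrow>\<^sub>E T. inj_on f S} = fact (card T) div (fact (card T - card S))"
  using assms
proof (induct S arbitrary: T rule: finite_induct)
  case empty
  from this show ?case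
    by (simp add: Collect_conv_if PiE_empty_domain)
next
  case (insert x S)
  have finite_delete: "finite {f \<in> S \<rightarrow>\<^sub>E (T - {x}). inj_on f S}" for x
  proof -
    from \<open>finite T\<close> have "finite (T - {x})"
      by auto
    from \<open>finite S\<close> this have *: "finite (S \<rightarrow>\<^sub>E (T - {x}))"
      by (rule finite_PiE)
    have "{f \<in> S \<rightarrow>\<^sub>E (T - {x}). inj_on f S} \<subseteq> (S \<rightarrow>\<^sub>E (T - {x}))"
      by auto
    with * show ?thesis
      by (auto intro: finite_subset)
  qed
  from insert have hyps: "\<forall>y \<in> T. card ({g. g \<in> S \<rightarrow>\<^sub>E (T - {y}) \<and> inj_on g S}) =
      fact (card T - 1) div fact ((card T - 1) - card S)"(is "\<forall> _ \<in> T. _ = ?k")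
    by auto
  from extensional_funcset_extend_domain_inj_on_eq[OF \<open>x \<notin> S\<close>]
  have "card {f. f \<in> (insert x S) \<rightarrow>\<^sub>E T \<and> inj_on f (insert x S)} =
      card ((\<lambda>(y, g). g(x := y)) ` {(y, g). y \<in> T \<and> g \<in> S \<rightarrow>\<^sub>E (T - {y}) \<and> inj_on g S})"
    by metis
  also from extensional_funcset_extend_domain_inj_onI[OF \<open>x \<notin> S\<close>, of T]
  have "\<dots> = card {(y, g). y \<in> T \<and> g \<in> S \<rightarrow>\<^sub>E (T - {y}) \<and> inj_on g S}"
    by (simp add: card_image)
  also have "card {(y, g). y \<in> T \<and> g \<in> S \<rightarrow>\<^sub>E (T - {y}) \<and> inj_on g S} =
      card (SIGMA y:T. {g \<in> S \<rightarrow>\<^sub>E (T - {y}). inj_on g S})"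
    by (auto intro!: arg_cong[where f=card])
  also from \<open>finite T\<close> finite_delete
  have "\<dots> = (\<Sum>y \<in> T. card {g. g \<in> S \<rightarrow>\<^sub>E (T - {y}) \<and>  inj_on g S})"
    by (subst card_SigmaI) auto
  also from hyps have "\<dots> = (card T) * ?k"
    by auto
  also have "\<dots> = card T * fact (card T - 1) div fact (card T - card (insert x S))"
    using insert unfolding div_mult1_eq[of "card T" "fact (card T - 1)"]
    by (simp add: fact_mod)
  also have "\<dots> = fact (card T) div fact (card T - card (insert x S))"
    using insert by (simp add: fact_reduce[of "card T"])
  finally show ?case .
qed

lemma clique:
  assumes C: "finite C" and E: "\<forall>u\<in>C. \<forall>v\<in>C. E u v \<longleftrightarrow> u \<noteq> v"
  shows "card (col C E \<beta>) = (if (\<forall>i. Poly_Mapping.lookup \<beta> i \<le> 1) \<and>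
            (\<Sum>i\<in>Poly_Mapping.keys \<beta>. Poly_Mapping.lookup \<beta> i) = card C then fact (card C) else 0)"
proof -
  have pr: "proper_col C E k \<longleftrightarrow> inj_on k C" for k
    using E unfolding proper_col_def inj_on_def by blast
  have key: "cv C k = \<beta> \<longleftrightarrow> (k ` C = Poly_Mapping.keys \<beta> \<and> (\<forall>i\<in>Poly_Mapping.keys \<beta>. Poly_Mapping.lookup \<beta> i = 1))"
    if "inj_on k C" for k
  proof
    assume "cv C k = \<beta>"
    hence l: "Poly_Mapping.lookup \<beta> i = (if i \<in> k ` C then 1 else 0)" for i
      using cv_inj[OF C that] by metis
    hence "k ` C = Poly_Mapping.keys \<beta>" by (auto simp: in_keys_iff split: if_splits)
    thus "k ` C = Poly_Mapping.keys \<beta> \<and> (\<forall>i\<in>Poly_Mapping.keys \<beta>. Poly_Mapping.lookup \<beta> i = 1)"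
      using l by auto
  next
    assume a: "k ` C = Poly_Mapping.keys \<beta> \<and> (\<forall>i\<in>Poly_Mapping.keys \<beta>. Poly_Mapping.lookup \<beta> i = 1)"
    show "cv C k = \<beta>"
    proof (rule poly_mapping_eqI)
      fix i show "Poly_Mapping.lookup (cv C k) i = Poly_Mapping.lookup \<beta> i"
        using a cv_inj[OF C that, of i] by (auto simp: in_keys_iff)
    qed
  qed
  show ?thesis
  proof (cases "(\<forall>i. Poly_Mapping.lookup \<beta> i \<le> 1) \<and>
            (\<Sum>i\<in>Poly_Mapping.keys \<beta>. Poly_Mapping.lookup \<beta> i) = card C")
    case True
    have one: "\<forall>i\<in>Poly_Mapping.keys \<beta>. Poly_Mapping.lookup \<beta> i = 1"
    proof
      fix i assume "i \<in> Poly_Mapping.keys \<beta>"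
      hence "Poly_Mapping.lookup \<beta> i \<noteq> 0" by (simp add: in_keys_iff)
      moreover have "Poly_Mapping.lookup \<beta> i \<le> 1" using True by blast
      ultimately show "Poly_Mapping.lookup \<beta> i = 1" by linarith
    qed
    hence "(\<Sum>i\<in>Poly_Mapping.keys \<beta>. Poly_Mapping.lookup \<beta> i) = card (Poly_Mapping.keys \<beta>)" by simp
    hence cK: "card (Poly_Mapping.keys \<beta>) = card C" using True by simp
    have "col C E \<beta> = {f \<in> C \<rightarrow>\<^sub>E Poly_Mapping.keys \<beta>. inj_on f C}"
    proof
      show "col C E \<beta> \<subseteq> {f \<in> C \<rightarrow>\<^sub>E Poly_Mapping.keys \<beta>. inj_on f C}"
        unfolding col_def using pr key by (auto simp: PiE_def Pi_def)
    next
      show "{f \<in> C \<rightarrow>\<^sub>E Poly_Mapping.keys \<beta>. inj_on f C} \<subseteq> col C E \<beta>"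
      proof
        fix f assume f: "f \<in> {f \<in> C \<rightarrow>\<^sub>E Poly_Mapping.keys \<beta>. inj_on f C}"
        have sub: "f ` C \<subseteq> Poly_Mapping.keys \<beta>" using f by auto
        have "card (f ` C) = card (Poly_Mapping.keys \<beta>)" using f cK by (simp add: card_image)
        hence "f ` C = Poly_Mapping.keys \<beta>" using sub by (simp add: card_subset_eq)
        thus "f \<in> col C E \<beta>" using f one pr key unfolding col_def by (auto simp: PiE_def)
      qed
    qed
    hence "card (col C E \<beta>) = fact (card C)"
      using card_inj_funcset[OF C finite_keys, of \<beta>] cK by simp
    thus ?thesis using True by simp
  next
    case False
    have "col C E \<beta> = {}"
    proof (rule ccontr)
      assume "col C E \<beta> \<noteq> {}"
      then obtain k where k: "k \<in> col C E \<beta>" by blast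
      have inj: "inj_on k C" and kk: "k ` C = Poly_Mapping.keys \<beta>"
        and one: "\<forall>i\<in>Poly_Mapping.keys \<beta>. Poly_Mapping.lookup \<beta> i = 1"
        using k pr key unfolding col_def by auto
      have "\<forall>i. Poly_Mapping.lookup \<beta> i \<le> 1"
      proof
        fix i show "Poly_Mapping.lookup \<beta> i \<le> 1"
          using one by (cases "i \<in> Poly_Mapping.keys \<beta>") (auto simp: in_keys_iff)
      qed
      moreover have "(\<Sum>i\<in>Poly_Mapping.keys \<beta>. Poly_Mapping.lookup \<beta> i) = card C"
        using one kk inj by (simp add: card_image[symmetric])
      ultimately show False using False by simp
    qed
    thus ?thesis using False by simp
  qed
qed

lemma iso_card:
  assumes V': "finite V'" and h: "bij_betw h V' V"
    and E: "\<forall>u\<in>V'. \<forall>v\<in>V'. E' u v \<longleftrightarrow> E (h u) (h v)"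
  shows "card {k \<in> col V E \<alpha>. P (restrict (k \<circ> h) V')} = card {k \<in> col V' E' \<alpha>. P k}"
proof -
  have V: "finite V" using V' h bij_betw_finite by blast
  define g where "g = inv_into V' h"
  have hV: "\<And>v. v \<in> V' \<Longrightarrow> h v \<in> V" and gV: "\<And>v. v \<in> V \<Longrightarrow> g v \<in> V'"
    using h unfolding g_def bij_betw_def by (auto simp: inv_into_into)
  have hg: "\<And>v. v \<in> V \<Longrightarrow> h (g v) = v" using h unfolding g_def bij_betw_def by (simp add: f_inv_into_f)
  have gh: "\<And>v. v \<in> V' \<Longrightarrow> g (h v) = v" using h unfolding g_def bij_betw_def by (simp add: inv_into_f_f)
  have cvh: "cv V' (k \<circ> h) = cv V k" for k
  proof (rule poly_mapping_eqI)
    fix i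
    have "h ` {v\<in>V'. k (h v) = i} = {v\<in>V. k v = i}"
      using hV gV hg by (auto intro!: image_eqI[where x="g _"])
    moreover have "inj_on h {v\<in>V'. k (h v) = i}" using h unfolding bij_betw_def
      by (auto intro: inj_on_subset)
    ultimately have "card {v\<in>V'. k (h v) = i} = card {v\<in>V. k v = i}" by (metis card_image)
    thus "Poly_Mapping.lookup (cv V' (k \<circ> h)) i = Poly_Mapping.lookup (cv V k) i"
      using V V' by (simp add: lookup_cv)
  qed
  have cvg: "cv V (k \<circ> g) = cv V' k" for k
  proof (rule poly_mapping_eqI)
    fix i
    have "g ` {v\<in>V. k (g v) = i} = {v\<in>V'. k v = i}"
    proof
      show "g ` {v\<in>V. k (g v) = i} \<subseteq> {v\<in>V'. k v = i}" using gV by auto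
      show "{v\<in>V'. k v = i} \<subseteq> g ` {v\<in>V. k (g v) = i}"
      proof
        fix v assume v: "v \<in> {v\<in>V'. k v = i}"
        hence "h v \<in> {v\<in>V. k (g v) = i}" using hV gh by auto
        moreover have "v = g (h v)" using v gh by auto
        ultimately show "v \<in> g ` {v\<in>V. k (g v) = i}" by blast
      qed
    qed
    moreover have "inj_on g {v\<in>V. k (g v) = i}" 
    proof (rule inj_onI)
      fix x y assume "x \<in> {v\<in>V. k (g v) = i}" "y \<in> {v\<in>V. k (g v) = i}" "g x = g y"
      thus "x = y" using hg by (metis (no_types, lifting) mem_Collect_eq)
    qed
    ultimately have "card {v\<in>V. k (g v) = i} = card {v\<in>V'. k v = i}" by (metis card_image)
    thus "Poly_Mapping.lookup (cv V (k \<circ> g)) i = Poly_Mapping.lookup (cv V' k) i"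
      using V V' by (simp add: lookup_cv)
  qed
  let ?f = "\<lambda>k. restrict (k \<circ> h) V'"
  let ?g = "\<lambda>k. restrict (k \<circ> g) V"
  have "bij_betw ?f {k \<in> col V E \<alpha>. P (?f k)} {k \<in> col V' E' \<alpha>. P k}"
  proof (rule bij_betw_byWitness[where f'="?g"])
    show "\<forall>k\<in>{k \<in> col V E \<alpha>. P (?f k)}. ?g (?f k) = k"
      unfolding col_def using hg gV by (auto simp: fun_eq_iff PiE_def extensional_def)
    show "\<forall>k\<in>{k \<in> col V' E' \<alpha>. P k}. ?f (?g k) = k"
      unfolding col_def using gh hV by (auto simp: fun_eq_iff PiE_def extensional_def)
    show "?f ` {k \<in> col V E \<alpha>. P (?f k)} \<subseteq> {k \<in> col V' E' \<alpha>. P k}"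
    proof
      fix x assume "x \<in> ?f ` {k \<in> col V E \<alpha>. P (?f k)}"
      then obtain k where k: "k \<in> col V E \<alpha>" "P (?f k)" "x = ?f k" by blast
      have "proper_col V' E' x" using k hV E unfolding col_def proper_col_def by auto
      moreover have "cv V' x = \<alpha>" using k cv_restrict[of V' "k \<circ> h"] cvh unfolding col_def by simp
      ultimately show "x \<in> {k \<in> col V' E' \<alpha>. P k}" using k unfolding col_def by auto
    qed
    show "?g ` {k \<in> col V' E' \<alpha>. P k} \<subseteq> {k \<in> col V E \<alpha>. P (?f k)}"
    proof
      fix x assume "x \<in> ?g ` {k \<in> col V' E' \<alpha>. P k}"
      then obtain k where k: "k \<in> col V' E' \<alpha>" "P k" "x = ?g k" by blast
      have "proper_col V E x"
        unfolding proper_col_def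
      proof (intro ballI impI)
        fix u v assume uv: "u \<in> V" "v \<in> V" "E u v"
        hence "E' (g u) (g v)" using E gV hg by metis
        thus "x u \<noteq> x v" using k uv gV unfolding col_def proper_col_def by auto
      qed
      moreover have "cv V x = \<alpha>" using k cv_restrict[of V "k \<circ> g"] cvg unfolding col_def by simp
      moreover have "?f x = k" using k gh hV unfolding col_def by (auto simp: fun_eq_iff PiE_def extensional_def)
      ultimately show "x \<in> {k \<in> col V E \<alpha>. P (?f k)}" using k unfolding col_def by auto
    qed
  qed
  thus ?thesis by (rule bij_betw_same_card)
qed


definition EU :: "nat \<Rightarrow> nat \<Rightarrow> nat \<Rightarrow> bool" where
  "EU a u v \<longleftrightarrow> (u < a \<and> v < a \<and> u \<noteq> v) \<or> ((u = v + 1 \<or> v = u + 1) \<and> a \<le> min u v)"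

lemma bij_shift: "bij_betw (\<lambda>v. v + a) {0..<n - a} {a..<(n::nat)}"
proof (rule bij_betw_byWitness[where f'="\<lambda>v. v - a"])
  show "(\<lambda>v. v - a) ` {a..<n} \<subseteq> {0..<n - a}" by auto
  show "(\<lambda>v. v + a) ` {0..<n - a} \<subseteq> {a..<n}" by auto
qed auto

lemma W_eq:
  assumes "a \<le> n"
  shows "of_nat (card (col {0..<n} (EU a) \<alpha>)) = fact a * sf_mult (elem_sf a) (chrom_sf (path_V (n - a)) path_E) \<alpha>"
proof -
  have B: "{0..<n} - {0..<a} = {a..<n}" by auto
  have c: "card (col {0..<n} (EU a) \<alpha>) = (\<Sum>p\<in>{(\<beta>, \<gamma>). \<beta> + \<gamma> = \<alpha>}. card (col {0..<a} (EU a) (fst p)) * card (col {a..<n} (EU a) (snd p)))"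
    using conv[of "{0..<n}" "{0..<a}" "{a..<n}" "EU a" \<alpha>] assms B by (auto simp: EU_def)
  have cl: "card (col {0..<a} (EU a) \<beta>) = (if (\<forall>i. Poly_Mapping.lookup \<beta> i \<le> 1) \<and>
            (\<Sum>i\<in>Poly_Mapping.keys \<beta>. Poly_Mapping.lookup \<beta> i) = a then fact a else 0)" for \<beta>
    using clique[of "{0..<a}" "EU a" \<beta>] by (auto simp: EU_def)
  have cl2: "(of_nat (card (col {0..<a} (EU a) \<beta>)) :: rat) = fact a * elem_sf a \<beta>" for \<beta>
    unfolding cl elem_sf_def by simp
  have pa: "card (col {a..<n} (EU a) \<gamma>) = card (col {0..<n-a} path_E \<gamma>)" for \<gamma>
    using iso_card[of "{0..<n-a}" "\<lambda>v. v + a" "{a..<n}" path_E "EU a" \<gamma> "\<lambda>_. True"] bij_shift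
    by (auto simp: EU_def path_E_def)
  have "(of_nat (card (col {0..<n} (EU a) \<alpha>)) :: rat) = (\<Sum>p\<in>{(\<beta>, \<gamma>). \<beta> + \<gamma> = \<alpha>}. (fact a * elem_sf a (fst p)) * chrom_sf (path_V (n - a)) path_E (snd p))"
    unfolding c of_nat_sum of_nat_mult cl2 pa by (simp add: chrom_col path_V_def)
  also have "\<dots> = fact a * sf_mult (elem_sf a) (chrom_sf (path_V (n - a)) path_E) \<alpha>"
    unfolding sf_mult_def by (simp add: sum_distrib_left mult.assoc)
  finally show ?thesis .
qed


definition sw :: "nat \<Rightarrow> nat \<Rightarrow> nat \<Rightarrow> nat" where
  "sw j m v = (if v = j then m else if v = m then j else v)"

lemma sw_EU: assumes "j < a" "a \<ge> 1" shows "EU a u v \<longleftrightarrow> EU a (sw j (a - 1) u) (sw j (a - 1) v)"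
  using assms unfolding EU_def sw_def by auto

lemma lol_Suc: "lollipop_E (Suc a) u v \<longleftrightarrow> EU a u v \<or> (u = a \<and> v < a) \<or> (v = a \<and> u < a)"
  unfolding lollipop_E_def EU_def by auto

lemma lol_a: "a \<ge> 1 \<Longrightarrow> lollipop_E a u v \<longleftrightarrow> EU a u v \<or> (u = a - 1 \<and> v = a) \<or> (u = a \<and> v = a - 1)"
  unfolding lollipop_E_def EU_def by auto

lemma recur:
  assumes a1: "1 \<le> a" and an: "a < n"
  shows "int (card (col {0..<n} (lollipop_E (Suc a)) \<alpha>)) =
     (1 - int a) * int (card (col {0..<n} (EU a) \<alpha>)) + int a * int (card (col {0..<n} (lollipop_E a) \<alpha>))"
proof -
  let ?V = "{0..<n}"
  define W where "W = col ?V (EU a) \<alpha>"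
  define D where "D = (\<lambda>j. {k \<in> W. k a = k j})"
  have fW: "finite W" unfolding W_def by (simp add: finite_col)
  have L1: "col ?V (lollipop_E (Suc a)) \<alpha> = W - (\<Union>j\<in>{..<a}. D j)"
  proof -
    have "proper_col ?V (lollipop_E (Suc a)) k \<longleftrightarrow> proper_col ?V (EU a) k \<and> (\<forall>j<a. k a \<noteq> k j)" for k
    proof
      assume H: "proper_col ?V (lollipop_E (Suc a)) k"
      have "proper_col ?V (EU a) k" using H unfolding proper_col_def lol_Suc by blast
      moreover have "k a \<noteq> k j" if "j < a" for j
        using H that an unfolding proper_col_def lol_Suc by simp
      ultimately show "proper_col ?V (EU a) k \<and> (\<forall>j<a. k a \<noteq> k j)" by blast
    next
      assume H: "proper_col ?V (EU a) k \<and> (\<forall>j<a. k a \<noteq> k j)"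
      show "proper_col ?V (lollipop_E (Suc a)) k" unfolding proper_col_def lol_Suc
      proof (intro ballI impI)
        fix u v assume uv: "u \<in> ?V" "v \<in> ?V" "EU a u v \<or> (u = a \<and> v < a) \<or> (v = a \<and> u < a)"
        thus "k u \<noteq> k v" using H unfolding proper_col_def by (metis (no_types, lifting))
      qed
    qed
    thus ?thesis unfolding W_def D_def col_def by auto
  qed
  have L2: "col ?V (lollipop_E a) \<alpha> = W - D (a - 1)"
  proof -
    have "proper_col ?V (lollipop_E a) k \<longleftrightarrow> proper_col ?V (EU a) k \<and> k a \<noteq> k (a - 1)" for k
    proof
      assume H: "proper_col ?V (lollipop_E a) k"
      have "proper_col ?V (EU a) k" using H unfolding proper_col_def lol_a[OF a1] by blast
      moreover have "a \<in> ?V" "a - 1 \<in> ?V" using an by auto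
      hence "k a \<noteq> k (a - 1)"
        using H unfolding proper_col_def lol_a[OF a1] by blast
      ultimately show "proper_col ?V (EU a) k \<and> k a \<noteq> k (a - 1)" by blast
    next
      assume H: "proper_col ?V (EU a) k \<and> k a \<noteq> k (a - 1)"
      show "proper_col ?V (lollipop_E a) k" unfolding proper_col_def lol_a[OF a1]
      proof (intro ballI impI)
        fix u v assume uv: "u \<in> ?V" "v \<in> ?V" "EU a u v \<or> (u = a - 1 \<and> v = a) \<or> (u = a \<and> v = a - 1)"
        thus "k u \<noteq> k v" using H unfolding proper_col_def by (metis (no_types, lifting))
      qed
    qed
    thus ?thesis unfolding W_def D_def col_def by auto
  qed
  have disj: "D i \<inter> D j = {}" if "i < a" "j < a" "i \<noteq> j" for i j
  proof -
    have "k i \<noteq> k j" if "k \<in> W" for k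
      using that \<open>i < a\<close> \<open>j < a\<close> \<open>i \<noteq> j\<close> an unfolding W_def col_def proper_col_def EU_def by auto
    thus ?thesis unfolding D_def by (auto; metis)
  qed
  have cD: "card (D j) = card (D (a - 1))" if "j < a" for j
  proof -
    have bij: "bij_betw (sw j (a - 1)) ?V ?V"
      by (rule bij_betw_byWitness[where f'="sw j (a - 1)"]) (use that an in \<open>auto simp: sw_def\<close>)
    have "card {k \<in> col ?V (EU a) \<alpha>. (\<lambda>k'. k' a = k' (a - 1)) (restrict (k \<circ> sw j (a - 1)) ?V)}
        = card {k \<in> col ?V (EU a) \<alpha>. (\<lambda>k'. k' a = k' (a - 1)) k}"
      by (rule iso_card) (use bij sw_EU[OF that a1] in auto)
    moreover have "{k \<in> col ?V (EU a) \<alpha>. (\<lambda>k'. k' a = k' (a - 1)) (restrict (k \<circ> sw j (a - 1)) ?V)} = D j"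
      unfolding D_def W_def using that an a1 by (auto simp: sw_def)
    ultimately show ?thesis unfolding D_def W_def by simp
  qed
  have sub: "(\<Union>j\<in>{..<a}. D j) \<subseteq> W" and sub2: "D (a - 1) \<subseteq> W" unfolding D_def by auto
  have fD: "finite (D j)" for j using fW unfolding D_def by simp
  have "card (\<Union>j\<in>{..<a}. D j) = (\<Sum>j<a. card (D j))"
  proof (rule card_UN_disjoint)
    show "finite {..<a}" by simp
    show "\<forall>i\<in>{..<a}. finite (D i)" using fD by blast
    show "\<forall>i\<in>{..<a}. \<forall>j\<in>{..<a}. i \<noteq> j \<longrightarrow> D i \<inter> D j = {}" using disj by blast
  qed
  also have "\<dots> = (\<Sum>j<a. card (D (a - 1)))"
    by (intro sum.cong refl cD) simp
  also have "\<dots> = a * card (D (a - 1))" by simp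
  finally have cU: "card (\<Union>j\<in>{..<a}. D j) = a * card (D (a - 1))" .
  have e1: "card (col ?V (lollipop_E (Suc a)) \<alpha>) = card W - a * card (D (a - 1))"
    unfolding L1 using card_Diff_subset[OF finite_subset[OF sub fW] sub] cU by simp
  have le1: "a * card (D (a - 1)) \<le> card W" using card_mono[OF fW sub] cU by simp
  have e2: "card (col ?V (lollipop_E a) \<alpha>) = card W - card (D (a - 1))"
    unfolding L2 using card_Diff_subset[OF finite_subset[OF sub2 fW] sub2] by simp
  have le2: "card (D (a - 1)) \<le> card W" using card_mono[OF fW sub2] by simp
  show ?thesis unfolding W_def[symmetric] e1 e2 using le1 le2 by (simp add: of_nat_diff algebra_simps)
qed


lemma L0: "lollipop_E (Suc 0) = EU 0"
  unfolding lollipop_E_def EU_def by (auto simp: fun_eq_iff)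

lemma Kn:
  assumes "1 \<le> n"
  shows "(of_nat (card (col {0..<n} (EU n) \<alpha>)) :: rat) = fact n * elem_sf n \<alpha>"
    and "(of_nat (card (col {0..<n} (lollipop_E (Suc (n - 1))) \<alpha>)) :: rat) = fact n * elem_sf n \<alpha>"
proof -
  show "(of_nat (card (col {0..<n} (EU n) \<alpha>)) :: rat) = fact n * elem_sf n \<alpha>"
    using clique[of "{0..<n}" "EU n" \<alpha>] unfolding elem_sf_def by (auto simp: EU_def)
  have "Suc (n - 1) = n" using assms by simp
  thus "(of_nat (card (col {0..<n} (lollipop_E (Suc (n - 1))) \<alpha>)) :: rat) = fact n * elem_sf n \<alpha>"
    using clique[of "{0..<n}" "lollipop_E n" \<alpha>] unfolding elem_sf_def by (auto simp: lollipop_E_def)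
qed

lemma partial:
  fixes n :: nat
  assumes "b < n"
  shows "(\<Sum>l=0..b. (1 - of_nat l) * (of_nat (card (col {0..<n} (EU l) \<alpha>)) / fact l))
     = (of_nat (card (col {0..<n} (lollipop_E (Suc b)) \<alpha>)) :: rat) / fact b"
  using assms
proof (induction b)
  case 0
  thus ?case by (simp add: L0)
next
  case (Suc b)
  have r: "int (card (col {0..<n} (lollipop_E (Suc (Suc b))) \<alpha>)) =
     (1 - int (Suc b)) * int (card (col {0..<n} (EU (Suc b)) \<alpha>)) + int (Suc b) * int (card (col {0..<n} (lollipop_E (Suc b)) \<alpha>))"
    using recur[of "Suc b" n \<alpha>] Suc.prems by simp
  hence r': "(of_nat (card (col {0..<n} (lollipop_E (Suc (Suc b))) \<alpha>)) :: rat) =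
     (1 - of_nat (Suc b)) * of_nat (card (col {0..<n} (EU (Suc b)) \<alpha>)) + of_nat (Suc b) * of_nat (card (col {0..<n} (lollipop_E (Suc b)) \<alpha>))"
    by (metis (mono_tags, lifting) of_int_of_nat_eq of_int_add of_int_mult of_int_diff of_int_1)
  have "(\<Sum>l=0..Suc b. (1 - of_nat l) * (of_nat (card (col {0..<n} (EU l) \<alpha>)) / fact l))
      = (of_nat (card (col {0..<n} (lollipop_E (Suc b)) \<alpha>)) :: rat) / fact b
        + (1 - of_nat (Suc b)) * (of_nat (card (col {0..<n} (EU (Suc b)) \<alpha>)) / fact (Suc b))"
    using Suc by simp
  also have "\<dots> = (of_nat (card (col {0..<n} (lollipop_E (Suc (Suc b))) \<alpha>)) :: rat) / fact (Suc b)"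
  proof -
    have f: "(fact (Suc b) :: rat) = of_nat (Suc b) * fact b" by simp
    have nz: "(fact b :: rat) \<noteq> 0" by simp
    have g: "x / fb + (1 - sb) * (y / (sb * fb)) = ((1 - sb) * y + sb * x) / (sb * fb)"
      if "fb \<noteq> 0" "sb \<noteq> 0" for x y fb sb :: rat
      using that by (simp add: field_simps)
    show ?thesis unfolding r' f by (rule g[OF nz]) simp
  qed
  finally show ?case .
qed

theorem lemma4p4:
  fixes n a :: nat
  assumes "1 \<le> n" and "a \<le> n"
  shows "(\<lambda>\<alpha>. \<Sum>l=0..a. (1 - of_nat l) * sf_mult (elem_sf l) (chrom_sf (path_V (n - l)) path_E) \<alpha>)
       = (if a \<le> n - 1
          then (\<lambda>\<alpha>. chrom_sf (lollipop_V (a + 1) (n - 1 - a)) (lollipop_E (a + 1)) \<alpha> / fact a)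
          else elem_sf n)"
proof (rule ext)
  fix \<alpha>
  have t: "sf_mult (elem_sf l) (chrom_sf (path_V (n - l)) path_E) \<alpha> = of_nat (card (col {0..<n} (EU l) \<alpha>)) / fact l"
    if "l \<le> n" for l
    using W_eq[OF that, of \<alpha>] by (simp add: field_simps)
  have lhs: "(\<Sum>l=0..b. (1 - of_nat l) * sf_mult (elem_sf l) (chrom_sf (path_V (n - l)) path_E) \<alpha>)
      = (\<Sum>l=0..b. (1 - of_nat l) * (of_nat (card (col {0..<n} (EU l) \<alpha>)) / fact l))" if "b \<le> n" for b
    by (rule sum.cong) (use that t in auto)
  show "(\<Sum>l=0..a. (1 - of_nat l) * sf_mult (elem_sf l) (chrom_sf (path_V (n - l)) path_E) \<alpha>)
       = (if a \<le> n - 1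
          then (\<lambda>\<alpha>. chrom_sf (lollipop_V (a + 1) (n - 1 - a)) (lollipop_E (a + 1)) \<alpha> / fact a)
          else elem_sf n) \<alpha>"
  proof (cases "a \<le> n - 1")
    case True
    have V: "lollipop_V (Suc a) (n - Suc a) = {0..<n}" using True assms unfolding lollipop_V_def by auto
    show ?thesis using True assms lhs[OF assms(2)] partial[of a n \<alpha>]
      by (simp add: V chrom_col)
  next
    case False
    hence an: "a = n" using assms by simp
    obtain m where m: "n = Suc m" using assms by (cases n) auto
    have "(\<Sum>l=0..a. (1 - of_nat l) * (of_nat (card (col {0..<n} (EU l) \<alpha>)) / fact l))
       = (of_nat (card (col {0..<n} (lollipop_E (Suc m)) \<alpha>)) :: rat) / fact m
         + (1 - of_nat n) * (of_nat (card (col {0..<n} (EU n) \<alpha>)) / fact n)"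
      using partial[of m n \<alpha>] an m by simp
    also have "\<dots> = fact n * elem_sf n \<alpha> / fact m + (1 - of_nat n) * (fact n * elem_sf n \<alpha> / fact n)"
      using Kn[OF assms(1), of \<alpha>] m by simp
    also have "\<dots> = elem_sf n \<alpha>"
    proof -
      have f: "(fact n :: rat) = of_nat (Suc m) * fact m" using m by simp
      have nz: "(fact m :: rat) \<noteq> 0" by simp
      have g: "(sm * fm) * e / fm + (1 - sm) * ((sm * fm) * e / (sm * fm)) = e"
        if "fm \<noteq> 0" "sm \<noteq> 0" for e fm sm :: rat
        using that by (simp add: field_simps)
      show ?thesis unfolding f m[symmetric] by (rule g[OF nz]) (use m in simp)
    qed
    finally show ?thesis using False lhs[OF assms(2)] by simp
  qed
qed

end
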